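(* Let $x_1\ge\cdots\ge x_n$ and $y_1\ge\cdots\ge y_n$ be reals such that $\{x_i\}$ majorizes $\{y_i\}$. Suppose that in the negative-fill variable-processor cup game there is a filler move on the state $\{y_i\}$ such that after greedy emptying the state becomes $\{y_i'\}$. Then there is a filler move on the state $\{x_i\}$ (possibly with a different number of processors $p$) such that after greedy emptying the state becomes some $\{x_i'\}$ which majorizes $\{y_i'\}$.
   Context: For sequences $x_1\ge\cdots\ge x_n$ and $y_1\ge\cdots\ge y_n$ with $\sum_i x_i=\sum_i y_i$, $\{x_i\}$ majorizes $\{y_i\}$ if $\sum_{i=1}^m x_i\ge\sum_{i=1}^m y_i$ for every $m\le n$; for unsorted sequences this is applied after sorting. Negative-fill variable-processor cup game: a filler move chooses an integer $1\le p\le n$ and reals $a_i\in[0,1]$ with $\sum a_i=p$ and adds $a_i$ to cup $i$; greedy emptying then subtracts exactly $1$ from each of the $p$ cups with largest fill (fills may become negative). *)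

theory Defs
  imports Complex_Main
begin

text \<open>States of n cups are real lists of length n; cup i has fill xs!i.\<close>

definition majorizes :: "real list \<Rightarrow> real list \<Rightarrow> bool" where
  "majorizes xs ys \<longleftrightarrow>
     length xs = length ys \<and> sum_list xs = sum_list ys \<and>
     (\<forall>m \<le> length xs. sum_list (take m (rev (sort ys))) \<le> sum_list (take m (rev (sort xs))))"

definition filler_move :: "nat \<Rightarrow> nat \<Rightarrow> real list \<Rightarrow> bool" where
  "filler_move n p a \<longleftrightarrow>
     1 \<le> p \<and> p \<le> n \<and> length a = n \<and> (\<forall>i<n. 0 \<le> a!i \<and> a!i \<le> 1) \<and> sum_list a = real p"

text \<open>Greedy emptying with p processors: subtract exactly 1 from each of p cups with
  largest fill (any tie-breaking; fills may become negative).\<close>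
definition greedy_empty :: "nat \<Rightarrow> real list \<Rightarrow> real list \<Rightarrow> bool" where
  "greedy_empty p z z' \<longleftrightarrow>
     (\<exists>S. S \<subseteq> {..<length z} \<and> card S = p \<and>
        (\<forall>i\<in>S. \<forall>j\<in>{..<length z} - S. z!j \<le> z!i) \<and>
        z' = map (\<lambda>i. z!i - (if i \<in> S then 1 else 0)) [0..<length z])"

definition cup_step :: "real list \<Rightarrow> real list \<Rightarrow> bool" where
  "cup_step x x' \<longleftrightarrow>
     (\<exists>p a. filler_move (length x) p a \<and> greedy_empty p (map2 (+) x a) x')"

end

theory Submission imports Defs "HOL-Library.Multiset" "HOL-Combinatorics.Permutations" begin

lemma subset_sum_le_prefix:
  fixes u :: "nat \<Rightarrow> real"
  assumes mono: "\<And>i j. i \<le> j \<Longrightarrow> j < n \<Longrightarrow> u j \<le> u i"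
    and J: "J \<subseteq> {..<n}" and cJ: "card J = m"
  shows "sum u J \<le> sum u {..<m}"
proof (cases "m = 0")
  case True
  then have "J = {}" using cJ J finite_subset by (metis card_0_eq finite_lessThan)
  then show ?thesis using True by simp
next
  case False
  have fJ: "finite J" using J finite_subset by blast
  have mn: "m \<le> n" using card_mono[OF _ J] cJ by simp
  define A where "A = J - {..<m}"
  define B where "B = {..<m} - J"
  define C where "C = J \<inter> {..<m}"
  have fA: "finite A" "finite B" "finite C" using fJ by (auto simp: A_def B_def C_def)
  have J_eq: "J = C \<union> A" "C \<inter> A = {}" by (auto simp: A_def C_def)
  have M_eq: "{..<m} = C \<union> B" "C \<inter> B = {}" by (auto simp: B_def C_def)
  have cA: "card J = card C + card A" using J_eq fA by (metis card_Un_disjoint)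
  have cB: "card {..<m} = card C + card B" using M_eq fA by (metis card_Un_disjoint)
  have cAB: "card A = card B" using cA cB cJ by simp
  define th where "th = u (m - 1)"
  have "sum u A \<le> sum (\<lambda>_. th) A"
  proof (rule sum_mono)
    fix j assume "j \<in> A"
    then have "m - 1 \<le> j" "j < n" using J by (auto simp: A_def)
    then show "u j \<le> th" unfolding th_def using mono by blast
  qed
  also have "\<dots> = real (card B) * th" using cAB by simp
  also have "\<dots> = sum (\<lambda>_. th) B" by simp
  also have "\<dots> \<le> sum u B"
  proof (rule sum_mono)
    fix j assume "j \<in> B"
    then have "j \<le> m - 1" "m - 1 < n" using mn False by (auto simp: B_def)
    then show "th \<le> u j" unfolding th_def using mono by blast
  qed
  finally have "sum u A \<le> sum u B" .
  moreover have "sum u J = sum u C + sum u A" using J_eq fA by (simp add: sum.union_disjoint)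
  moreover have "sum u {..<m} = sum u C + sum u B" using M_eq fA by (metis sum.union_disjoint)
  ultimately show ?thesis by linarith
qed

lemma rev_sort_id:
  fixes x :: "real list"
  assumes "sorted_wrt (\<ge>) x"
  shows "rev (sort x) = x"
proof -
  have "sorted (rev x)" using assms by (simp add: sorted_wrt_rev)
  then have "sort x = rev x" by (metis properties_for_sort mset_rev)
  then show ?thesis by simp
qed

lemma sum_take:
  fixes x :: "real list"
  assumes "m \<le> length x"
  shows "sum_list (take m x) = (\<Sum>j<m. x!j)"
  using assms by (simp add: sum_list_sum_nth atLeast0LessThan min_def)

lemma sorted_desc_nth:
  fixes x :: "real list"
  assumes "sorted_wrt (\<ge>) x" "i \<le> j" "j < length x"
  shows "x!j \<le> x!i"
  using assms sorted_wrt_nth_less by (metis le_eq_less_or_eq order_refl)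

lemma rev_sort_desc:
  fixes v :: "real list"
  shows "sorted_wrt (\<ge>) (rev (sort v))"
  by (simp add: sorted_wrt_rev)

lemma top_ge:
  fixes v :: "real list"
  assumes S: "S \<subseteq> {..<length v}" and cS: "card S = m"
  shows "(\<Sum>i\<in>S. v!i) \<le> sum_list (take m (rev (sort v)))"
proof -
  define u where "u = rev (sort v)"
  have mu: "mset v = mset u" by (simp add: u_def)
  have lu: "length u = length v" by (simp add: u_def)
  obtain p where p: "p permutes {..<length u}" "permute_list p u = v"
    using mset_eq_permutation[OF mu] by blast
  have vi: "v!i = u!(p i)" if "i < length v" for i
    using p that lu permute_list_nth by metis
  have injp: "inj_on p S" using p(1) permutes_inj inj_on_subset by blast
  have "(\<Sum>i\<in>S. v!i) = (\<Sum>i\<in>S. u!(p i))" using vi S by (intro sum.cong) auto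
  also have "\<dots> = (\<Sum>j\<in>p ` S. u!j)" by (simp add: sum.reindex[OF injp])
  also have "\<dots> \<le> (\<Sum>j<m. u!j)"
  proof (rule subset_sum_le_prefix[where n="length v"])
    show "\<And>i j. i \<le> j \<Longrightarrow> j < length v \<Longrightarrow> u!j \<le> u!i"
      using sorted_desc_nth[OF rev_sort_desc] by (simp add: u_def)
    show "p ` S \<subseteq> {..<length v}" using S p(1) lu permutes_image by (metis image_mono)
    show "card (p ` S) = m" using card_image[OF injp] cS by simp
  qed
  also have "\<dots> = sum_list (take m u)"
  proof -
    have "m \<le> length v" using card_mono[OF _ S] cS by simp
    then show ?thesis using sum_take lu by simp
  qed
  finally show ?thesis by (simp add: u_def)
qed

lemma top_attained:
  fixes v :: "real list"
  assumes m: "m \<le> length v"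
  shows "\<exists>S. S \<subseteq> {..<length v} \<and> card S = m \<and> sum_list (take m (rev (sort v))) = (\<Sum>i\<in>S. v!i)"
proof -
  define u where "u = rev (sort v)"
  have mu: "mset v = mset u" by (simp add: u_def)
  have lu: "length u = length v" by (simp add: u_def)
  obtain p where p: "p permutes {..<length u}" "permute_list p u = v"
    using mset_eq_permutation[OF mu] by blast
  have vi: "v!i = u!(p i)" if "i < length v" for i
    using p that lu permute_list_nth by metis
  define S where "S = inv p ` {..<m}"
  have pinv: "inv p permutes {..<length u}" using permutes_inv[OF p(1)] .
  have injq: "inj_on (inv p) {..<m}" using pinv permutes_inj inj_on_subset by blast
  have Ssub: "S \<subseteq> {..<length v}" unfolding S_def using pinv m lu permutes_image
    by (metis image_mono lessThan_subset_iff)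
  have cS: "card S = m" unfolding S_def using card_image[OF injq] by simp
  have "(\<Sum>i\<in>S. v!i) = (\<Sum>i\<in>S. u!(p i))" using vi Ssub by (intro sum.cong) auto
  also have "\<dots> = (\<Sum>j<m. u!(p (inv p j)))" unfolding S_def using sum.reindex[OF injq] by (simp add: o_def)
  also have "\<dots> = (\<Sum>j<m. u!j)" using permutes_inverses(1)[OF p(1)] by simp
  also have "\<dots> = sum_list (take m u)" using sum_take m lu by simp
  finally show ?thesis using Ssub cS by (auto simp: u_def)
qed


definition alp :: "real list \<Rightarrow> real \<Rightarrow> nat \<Rightarrow> real" where
  "alp x c m = (\<Sum>j<m. max (x!j) c)"
definition bet :: "real list \<Rightarrow> real \<Rightarrow> nat \<Rightarrow> real" where
  "bet x c m = (\<Sum>j<m. min (x!j) (c-1)) + (\<Sum>j<length x. max (x!j - (c-1)) 0)"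
definition FF :: "real list \<Rightarrow> real \<Rightarrow> nat \<Rightarrow> real" where
  "FF x c m = min (alp x c m) (bet x c m)"
definition xnew :: "real list \<Rightarrow> real \<Rightarrow> real list" where
  "xnew x c = map (\<lambda>i. FF x c (Suc i) - FF x c i) [0..<length x]"

lemma bet_alt:
  assumes "m \<le> length x"
  shows "bet x c m = (\<Sum>j<m. x!j) + (\<Sum>j\<in>{m..<length x}. max (x!j - (c-1)) 0)"
proof -
  have "(\<Sum>j<length x. max (x!j - (c-1)) 0) = (\<Sum>j<m. max (x!j - (c-1)) 0) + (\<Sum>j\<in>{m..<length x}. max (x!j - (c-1)) 0)"
    using assms by (metis atLeast0LessThan sum.atLeastLessThan_concat zero_le)
  moreover have "(\<Sum>j<m. min (x!j) (c-1)) + (\<Sum>j<m. max (x!j - (c-1)) 0) = (\<Sum>j<m. x!j)"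
    by (simp add: sum.distrib[symmetric]) (intro sum.cong, auto)
  ultimately show ?thesis unfolding bet_def by linarith
qed

lemma alp_ge: "(\<Sum>j<m. x!j) \<le> alp x c m"
  unfolding alp_def by (intro sum_mono) auto

lemma alp_eq: "(\<And>j. j < m \<Longrightarrow> c \<le> x!j) \<Longrightarrow> alp x c m = (\<Sum>j<m. x!j)"
  unfolding alp_def by (intro sum.cong) auto

lemma alp_gt: "j < m \<Longrightarrow> x!j < c \<Longrightarrow> (\<Sum>j<m. x!j) < alp x c m"
  unfolding alp_def by (intro sum_strict_mono_ex1) (auto intro!: bexI[where x=j])

lemma bet_ge: "m \<le> length x \<Longrightarrow> (\<Sum>j<m. x!j) \<le> bet x c m"
  by (simp add: bet_alt sum_nonneg)

lemma bet_eq: "m \<le> length x \<Longrightarrow> (\<And>j. m \<le> j \<Longrightarrow> j < length x \<Longrightarrow> x!j \<le> c - 1) \<Longrightarrow> bet x c m = (\<Sum>j<m. x!j)"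
  by (simp add: bet_alt)

lemma bet_gt: "m \<le> j \<Longrightarrow> j < length x \<Longrightarrow> c - 1 < x!j \<Longrightarrow> (\<Sum>j<m. x!j) < bet x c m"
proof -
  assume a: "m \<le> j" "j < length x" "c - 1 < x!j"
  have "0 < (\<Sum>j\<in>{m..<length x}. max (x!j - (c-1)) 0)"
    using a by (intro sum_pos2[where i=j]) auto
  then show ?thesis using a by (simp add: bet_alt)
qed

lemma alp_Suc: "alp x c (Suc m) = alp x c m + max (x!m) c"
  by (simp add: alp_def)
lemma bet_Suc: "bet x c (Suc m) = bet x c m + min (x!m) (c-1)"
  by (simp add: bet_def)

lemma xnew_box:
  fixes c :: real
  assumes srt: "sorted_wrt (\<ge>) x" and i: "i < length x"
  defines "v \<equiv> FF x c (Suc i) - FF x c i"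
  shows "x!i - 1 \<le> v \<and> v \<le> x!i + 1 \<and> (v < x!i \<longrightarrow> c - 1 \<le> v) \<and> (x!i < v \<longrightarrow> v \<le> c)"
proof -
  let ?X = "\<lambda>m. (\<Sum>j<m. x!j)"
  have XS: "?X (Suc i) = ?X i + x!i" by simp
  have aS: "alp x c (Suc i) = alp x c i + max (x!i) c" by (rule alp_Suc)
  have bS: "bet x c (Suc i) = bet x c i + min (x!i) (c-1)" by (rule bet_Suc)
  show ?thesis
  proof (cases "alp x c (Suc i) \<le> bet x c (Suc i)")
    case A: True
    have "alp x c i < bet x c i" using A aS bS by (auto simp: max_def min_def split: if_splits)
    then have vv: "v = max (x!i) c" using A aS unfolding v_def FF_def by simp
    have "c - 1 \<le> x!i"
    proof (rule ccontr)
      assume "\<not> c - 1 \<le> x!i"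
      then have h: "x!i < c - 1" by simp
      have "bet x c (Suc i) = ?X (Suc i)"
      proof (rule bet_eq)
        show "Suc i \<le> length x" using i by simp
        fix j assume "Suc i \<le> j" "j < length x"
        then have "x!j \<le> x!i" using sorted_desc_nth[OF srt] by simp
        then show "x!j \<le> c - 1" using h by simp
      qed
      moreover have "?X (Suc i) < alp x c (Suc i)" using h by (intro alp_gt[of i]) auto
      ultimately show False using A by simp
    qed
    then show ?thesis using vv by (auto simp: max_def)
  next
    case nA: False
    show ?thesis
    proof (cases "bet x c i \<le> alp x c i")
      case B: True
      then have vv: "v = min (x!i) (c - 1)" using nA bS unfolding v_def FF_def by simp
      have "x!i \<le> c"
      proof (rule ccontr)
        assume "\<not> x!i \<le> c"
        then have h: "c < x!i" by simp
        have "alp x c i = ?X i"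
        proof (rule alp_eq)
          fix j assume "j < i"
          then have "x!i \<le> x!j" using sorted_desc_nth[OF srt] i by simp
          then show "c \<le> x!j" using h by simp
        qed
        moreover have "?X i < bet x c i" using h i by (intro bet_gt[of i i]) auto
        ultimately show False using B by simp
      qed
      then show ?thesis using vv by (auto simp: min_def)
    next
      case nB: False
      then have vv: "v = bet x c (Suc i) - alp x c i" using nA unfolding v_def FF_def by simp
      have h1: "x!i \<le> c"
      proof (rule ccontr)
        assume "\<not> x!i \<le> c"
        then have h: "c < x!i" by simp
        have "alp x c (Suc i) = ?X (Suc i)"
        proof (rule alp_eq)
          fix j assume "j < Suc i"
          then have "x!i \<le> x!j" using sorted_desc_nth[OF srt] i by simp
          then show "c \<le> x!j" using h by simp
        qed
        moreover have "?X (Suc i) \<le> bet x c (Suc i)" using i by (intro bet_ge) auto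
        ultimately show False using nA by simp
      qed
      have h2: "c - 1 \<le> x!i"
      proof (rule ccontr)
        assume "\<not> c - 1 \<le> x!i"
        then have h: "x!i < c - 1" by simp
        have "bet x c i = ?X i"
        proof (rule bet_eq)
          show "i \<le> length x" using i by simp
          fix j assume "i \<le> j" "j < length x"
          then have "x!j \<le> x!i" using sorted_desc_nth[OF srt] by simp
          then show "x!j \<le> c - 1" using h by simp
        qed
        moreover have "?X i \<le> alp x c i" by (rule alp_ge)
        ultimately show False using nB by simp
      qed
      have "v < max (x!i) c" using vv nA aS by simp
      moreover have "min (x!i) (c-1) < v" using vv nB bS by simp
      ultimately have "c - 1 < v" "v < c" using h1 h2 by (auto simp: max_def min_def split: if_splits)
      then show ?thesis using h1 h2 by auto
    qed
  qed
qed


lemma thr_split: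
  fixes n :: nat
  assumes dc: "\<And>i j. i \<le> j \<Longrightarrow> j < n \<Longrightarrow> P j \<Longrightarrow> P i"
  shows "\<exists>k\<le>n. (\<forall>j<k. P j) \<and> (\<forall>j. k \<le> j \<and> j < n \<longrightarrow> \<not> P j)"
proof (cases "\<forall>j<n. P j")
  case True
  then show ?thesis by (intro exI[of _ n]) auto
next
  case False
  define k where "k = (LEAST j. j < n \<and> \<not> P j)"
  from False obtain j0 where j0: "j0 < n \<and> \<not> P j0" by auto
  have k1: "k < n \<and> \<not> P k" unfolding k_def using LeastI[of "\<lambda>j. j < n \<and> \<not> P j", OF j0] .
  have k2: "P j" if "j < k" for j
  proof -
    have "\<not> (j < n \<and> \<not> P j)" using not_less_Least[of j "\<lambda>j. j < n \<and> \<not> P j"] that unfolding k_def by blast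
    then show ?thesis using that k1 by auto
  qed
  have k3: "\<not> P j" if "k \<le> j" "j < n" for j
    using dc[OF that] k1 by blast
  show ?thesis using k1 k2 k3 by (intro exI[of _ k]) auto
qed

lemma split_sum:
  fixes f :: "nat \<Rightarrow> real"
  assumes "k \<le> m"
  shows "(\<Sum>j<m. f j) = (\<Sum>j<k. f j) + (\<Sum>j\<in>{k..<m}. f j)"
  using assms by (metis atLeast0LessThan sum.atLeastLessThan_concat zero_le)

lemma kar1:
  fixes x y :: "real list"
  assumes sx: "sorted_wrt (\<ge>) x" and sy: "sorted_wrt (\<ge>) y"
    and len: "length x = n" "length y = n"
    and pre: "\<And>k. k \<le> n \<Longrightarrow> (\<Sum>j<k. y!j) \<le> (\<Sum>j<k. x!j)"
    and m: "m \<le> n"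
  shows "alp y c m \<le> alp x c m"
proof -
  obtain k where k: "k \<le> n" "\<forall>j<k. c \<le> y!j" "\<forall>j. k \<le> j \<and> j < n \<longrightarrow> \<not> c \<le> y!j"
    using thr_split[of n "\<lambda>j. c \<le> y!j"] sorted_desc_nth[OF sy] len by force
  define k' where "k' = min k m"
  have k': "k' \<le> m" "k' \<le> n" using m by (auto simp: k'_def)
  have "alp y c m = (\<Sum>j<k'. max (y!j) c) + (\<Sum>j\<in>{k'..<m}. max (y!j) c)"
    unfolding alp_def using split_sum[OF k'(1)] by blast
  also have "(\<Sum>j<k'. max (y!j) c) = (\<Sum>j<k'. y!j)"
    using k(2) by (intro sum.cong) (auto simp: k'_def)
  also have "(\<Sum>j\<in>{k'..<m}. max (y!j) c) = (\<Sum>j\<in>{k'..<m}. c)"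
  proof (rule sum.cong)
    fix j assume j: "j \<in> {k'..<m}"
    show "max (y!j) c = c"
    proof (cases "k \<le> m")
      case True
      then show ?thesis using k(3) j m by (auto simp: k'_def)
    next
      case False
      then show ?thesis using j by (auto simp: k'_def)
    qed
  qed simp
  also have "(\<Sum>j<k'. y!j) \<le> (\<Sum>j<k'. x!j)" using pre k' by simp
  also have "(\<Sum>j<k'. x!j) \<le> (\<Sum>j<k'. max (x!j) c)" by (intro sum_mono) auto
  also have "(\<Sum>j\<in>{k'..<m}. c) \<le> (\<Sum>j\<in>{k'..<m}. max (x!j) c)" by (intro sum_mono) auto
  also have "(\<Sum>j<k'. max (x!j) c) + (\<Sum>j\<in>{k'..<m}. max (x!j) c) = alp x c m"
    unfolding alp_def using split_sum[OF k'(1)] by simp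
  finally show ?thesis by simp
qed

lemma kar2:
  fixes x y :: "real list"
  assumes sx: "sorted_wrt (\<ge>) x" and sy: "sorted_wrt (\<ge>) y"
    and len: "length x = n" "length y = n"
    and pre: "\<And>k. k \<le> n \<Longrightarrow> (\<Sum>j<k. y!j) \<le> (\<Sum>j<k. x!j)"
    and m: "m \<le> n"
  shows "bet y c m \<le> bet x c m"
proof -
  obtain k where k: "k \<le> n" "\<forall>j<k. c - 1 < y!j" "\<forall>j. k \<le> j \<and> j < n \<longrightarrow> \<not> c - 1 < y!j"
    using thr_split[of n "\<lambda>j. c - 1 < y!j"] sorted_desc_nth[OF sy] len by force
  define k' where "k' = max k m"
  have k': "m \<le> k'" "k' \<le> n" using m k by (auto simp: k'_def)
  have e1: "(\<Sum>j\<in>{m..<n}. max (y!j - (c-1)) 0) = (\<Sum>j\<in>{m..<k'}. max (y!j - (c-1)) 0) + (\<Sum>j\<in>{k'..<n}. max (y!j - (c-1)) 0)"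
    using k' by (simp add: sum.atLeastLessThan_concat)
  have e2: "(\<Sum>j\<in>{k'..<n}. max (y!j - (c-1)) 0) = 0"
    using k(3) by (intro sum.neutral) (auto simp: k'_def)
  have e3: "(\<Sum>j\<in>{m..<k'}. max (y!j - (c-1)) 0) = (\<Sum>j\<in>{m..<k'}. y!j - (c-1))"
    using k(2) k' by (intro sum.cong) (auto simp: k'_def)
  have e4: "(\<Sum>j\<in>{m..<k'}. x!j - (c-1)) \<le> (\<Sum>j\<in>{m..<n}. max (x!j - (c-1)) 0)"
  proof -
    have "(\<Sum>j\<in>{m..<k'}. x!j - (c-1)) \<le> (\<Sum>j\<in>{m..<k'}. max (x!j - (c-1)) 0)" by (intro sum_mono) auto
    also have "\<dots> \<le> (\<Sum>j\<in>{m..<n}. max (x!j - (c-1)) 0)" using k' by (intro sum_mono2) auto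
    finally show ?thesis .
  qed
  have s1: "(\<Sum>j<k'. y!j) = (\<Sum>j<m. y!j) + (\<Sum>j\<in>{m..<k'}. y!j)" using split_sum[OF k'(1)] by blast
  have s2: "(\<Sum>j<k'. x!j) = (\<Sum>j<m. x!j) + (\<Sum>j\<in>{m..<k'}. x!j)" using split_sum[OF k'(1)] by blast
  have s3: "(\<Sum>j\<in>{m..<k'}. y!j - (c-1)) = (\<Sum>j\<in>{m..<k'}. y!j) - real (k' - m) * (c-1)"
    by (simp add: sum_subtractf)
  have s4: "(\<Sum>j\<in>{m..<k'}. x!j - (c-1)) = (\<Sum>j\<in>{m..<k'}. x!j) - real (k' - m) * (c-1)"
    by (simp add: sum_subtractf)
  have "(\<Sum>j<k'. y!j) \<le> (\<Sum>j<k'. x!j)" using pre k' by simp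
  moreover have "bet y c m = (\<Sum>j<m. y!j) + (\<Sum>j\<in>{m..<n}. max (y!j - (c-1)) 0)" using bet_alt m len by metis
  moreover have "bet x c m = (\<Sum>j<m. x!j) + (\<Sum>j\<in>{m..<n}. max (x!j - (c-1)) 0)" using bet_alt m len by metis
  ultimately show ?thesis using e1 e2 e3 e4 s1 s2 s3 s4 by linarith
qed

lemma ybound:
  fixes x y y' :: "real list"
  assumes sx: "sorted_wrt (\<ge>) x" and sy: "sorted_wrt (\<ge>) y"
    and len: "length x = n" "length y = n" "length y' = n"
    and pre: "\<And>k. k \<le> n \<Longrightarrow> (\<Sum>j<k. y!j) \<le> (\<Sum>j<k. x!j)"
    and sm: "sum_list y' = sum_list y"
    and hi: "\<And>i. i < n \<Longrightarrow> y'!i \<le> max (y!i) c"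
    and lo: "\<And>i. i < n \<Longrightarrow> min (y!i) (c-1) \<le> y'!i"
    and S: "S \<subseteq> {..<n}" and cS: "card S = m"
  shows "(\<Sum>i\<in>S. y'!i) \<le> FF x c m"
proof -
  have m: "m \<le> n" using card_mono[OF _ S] cS by simp
  have fS: "finite S" using S finite_subset by blast
  have "(\<Sum>i\<in>S. y'!i) \<le> (\<Sum>i\<in>S. max (y!i) c)" using hi S by (intro sum_mono) auto
  also have "\<dots> \<le> (\<Sum>i<m. max (y!i) c)"
  proof (rule subset_sum_le_prefix[OF _ S cS])
    fix i j assume "i \<le> j" "j < n"
    then have "y!j \<le> y!i" using sorted_desc_nth[OF sy] len by simp
    then show "max (y!j) c \<le> max (y!i) c" by simp
  qed
  also have "\<dots> = alp y c m" by (simp add: alp_def)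
  also have "\<dots> \<le> alp x c m" by (rule kar1[OF sx sy len(1,2) pre m])
  finally have A: "(\<Sum>i\<in>S. y'!i) \<le> alp x c m" .
  let ?T = "{..<n} - S"
  have tot: "(\<Sum>i<n. y'!i) = (\<Sum>i<n. y!i)" using sm len by (simp add: sum_list_sum_nth atLeast0LessThan)
  have sp1: "(\<Sum>i<n. y'!i) = (\<Sum>i\<in>S. y'!i) + (\<Sum>i\<in>?T. y'!i)"
    using S fS by (metis finite_lessThan sum.subset_diff add.commute)
  have sp2: "(\<Sum>i<n. min (y!i) (c-1)) = (\<Sum>i\<in>S. min (y!i) (c-1)) + (\<Sum>i\<in>?T. min (y!i) (c-1))"
    using S fS by (metis finite_lessThan sum.subset_diff add.commute)
  have T1: "(\<Sum>i\<in>?T. min (y!i) (c-1)) \<le> (\<Sum>i\<in>?T. y'!i)" using lo by (intro sum_mono) auto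
  have yy: "(\<Sum>i<n. y!i) = (\<Sum>i<n. min (y!i) (c-1)) + (\<Sum>i<n. max (y!i - (c-1)) 0)"
    by (simp add: sum.distrib[symmetric]) (intro sum.cong, auto)
  have "(\<Sum>i\<in>S. min (y!i) (c-1)) \<le> (\<Sum>i<m. min (y!i) (c-1))"
  proof (rule subset_sum_le_prefix[OF _ S cS])
    fix i j assume "i \<le> j" "j < n"
    then have "y!j \<le> y!i" using sorted_desc_nth[OF sy] len by simp
    then show "min (y!j) (c-1) \<le> min (y!i) (c-1)" by simp
  qed
  then have "(\<Sum>i\<in>S. y'!i) \<le> bet y c m" unfolding bet_def using tot sp1 sp2 T1 yy len(2) by simp
  also have "\<dots> \<le> bet x c m" by (rule kar2[OF sx sy len(1,2) pre m])
  finally show ?thesis using A by (simp add: FF_def)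
qed

lemma xnew_prefix:
  assumes "m \<le> length x"
  shows "(\<Sum>i<m. xnew x c ! i) = FF x c m"
proof -
  have "(\<Sum>i<m. xnew x c ! i) = (\<Sum>i<m. FF x c (Suc i) - FF x c i)"
    using assms by (intro sum.cong) (auto simp: xnew_def)
  also have "\<dots> = FF x c m - FF x c 0" by (rule sum_lessThan_telescope)
  also have "FF x c 0 = 0" by (simp add: FF_def alp_def bet_def sum_nonneg)
  finally show ?thesis by simp
qed

lemma FF_n: "FF x c (length x) = sum_list x"
proof -
  have "bet x c (length x) = (\<Sum>j<length x. x!j)" by (simp add: bet_alt)
  moreover have "(\<Sum>j<length x. x!j) \<le> alp x c (length x)" by (rule alp_ge)
  ultimately show ?thesis by (simp add: FF_def sum_list_sum_nth atLeast0LessThan)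
qed


lemma cup_step_refl:
  assumes "1 \<le> length x"
  shows "cup_step x x"
proof -
  let ?n = "length x"
  let ?a = "replicate ?n (1::real)"
  have fm: "filler_move ?n ?n ?a" using assms by (simp add: filler_move_def sum_list_replicate)
  have ge: "greedy_empty ?n (map2 (+) x ?a) x"
    unfolding greedy_empty_def
    by (intro exI[of _ "{..<?n}"]) (auto intro!: nth_equalityI)
  show ?thesis unfolding cup_step_def using fm ge by blast
qed

lemma cup_step_xnew:
  fixes x :: "real list" and c :: real
  assumes srt: "sorted_wrt (\<ge>) x" and n1: "1 \<le> length x"
  shows "cup_step x (xnew x c)"
proof -
  define n where "n = length x"
  define v where "v = xnew x c"
  have lv: "length v = n" by (simp add: v_def xnew_def n_def)
  have vi: "v!i = FF x c (Suc i) - FF x c i" if "i < n" for i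
    using that by (simp add: v_def xnew_def n_def)
  have box: "x!i - 1 \<le> v!i \<and> v!i \<le> x!i + 1 \<and> (v!i < x!i \<longrightarrow> c - 1 \<le> v!i) \<and> (x!i < v!i \<longrightarrow> v!i \<le> c)"
    if "i < n" for i using xnew_box[OF srt, of i c] that vi by (simp add: n_def)
  have sv: "(\<Sum>i<n. v!i) = (\<Sum>i<n. x!i)"
    using xnew_prefix[of n x c] FF_n[of x c] by (simp add: v_def n_def sum_list_sum_nth atLeast0LessThan)
  define P where "P = {i. i < n \<and> v!i \<le> x!i \<and> c - 1 \<le> v!i}"
  have Psub: "P \<subseteq> {..<n}" by (auto simp: P_def)
  have fP: "finite P" using Psub finite_subset by blast
  show ?thesis
  proof (cases "P = {}")
    case True
    have ge0: "x!i \<le> v!i" if "i < n" for i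
    proof (rule ccontr)
      assume "\<not> x!i \<le> v!i"
      then have "v!i < x!i" by simp
      then have "c - 1 \<le> v!i" using box[OF that] by simp
      then have "i \<in> P" using \<open>v!i < x!i\<close> that by (auto simp: P_def)
      then show False using True by simp
    qed
    have "(\<Sum>i<n. v!i - x!i) = 0" using sv by (simp add: sum_subtractf)
    then have "\<forall>i\<in>{..<n}. v!i - x!i = 0" using ge0 by (subst sum_nonneg_eq_0_iff[symmetric]) auto
    then have "v = x" using lv by (intro nth_equalityI) (auto simp: n_def)
    then show ?thesis using cup_step_refl[OF n1] by (simp add: v_def)
  next
    case False
    define a where "a = map (\<lambda>i. v!i - x!i + (if i \<in> P then 1 else 0)) [0..<n]"
    have la: "length a = n" by (simp add: a_def)
    have ai: "a!i = v!i - x!i + (if i \<in> P then 1 else 0)" if "i < n" for i using that by (simp add: a_def)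
    have ind: "(\<Sum>i<n. if i \<in> P then (1::real) else 0) = real (card P)"
    proof -
      have "(\<Sum>i<n. if i \<in> P then (1::real) else 0) = (\<Sum>i\<in>P. 1)"
        using Psub by (simp add: sum.If_cases Int_absorb1 Int_absorb2)
      then show ?thesis by simp
    qed
    have suma: "sum_list a = real (card P)"
    proof -
      have "sum_list a = (\<Sum>i<n. (v!i - x!i) + (if i \<in> P then 1 else 0))"
        using ai la by (simp add: sum_list_sum_nth atLeast0LessThan)
      also have "\<dots> = (\<Sum>i<n. v!i - x!i) + (\<Sum>i<n. if i \<in> P then (1::real) else 0)"
        by (simp add: sum.distrib)
      also have "(\<Sum>i<n. v!i - x!i) = 0" using sv by (simp add: sum_subtractf)
      finally show ?thesis using ind by simp
    qed
    have fm: "filler_move n (card P) a"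
      unfolding filler_move_def
    proof (intro conjI allI impI)
      show "1 \<le> card P" using False fP by (simp add: Suc_le_eq card_gt_0_iff)
      show "card P \<le> n" using card_mono[OF _ Psub] by simp
      show "length a = n" by (rule la)
      show "sum_list a = real (card P)" by (rule suma)
    next
      fix i assume i: "i < n"
      show "0 \<le> a!i" using box[OF i] ai[OF i] i by (auto simp: P_def)
    next
      fix i assume i: "i < n"
      show "a!i \<le> 1" using box[OF i] ai[OF i] i by (auto simp: P_def)
    qed
    define z where "z = map2 (+) x a"
    have lz: "length z = n" using la by (simp add: z_def n_def)
    have zi: "z!i = v!i + (if i \<in> P then 1 else 0)" if "i < n" for i
      using that ai[OF that] la by (simp add: z_def n_def)
    have ge: "greedy_empty (card P) z v"
      unfolding greedy_empty_def
    proof (intro exI[of _ P] conjI ballI)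
      show "P \<subseteq> {..<length z}" using Psub lz by simp
      show "card P = card P" ..
    next
      fix i j assume iP: "i \<in> P" and j: "j \<in> {..<length z} - P"
      have jn: "j < n" "j \<notin> P" using j lz by auto
      have in_: "i < n" using iP by (simp add: P_def)
      have "v!j \<le> c"
      proof (cases "x!j < v!j")
        case True then show ?thesis using box[OF jn(1)] by simp
      next
        case False then show ?thesis using jn by (auto simp: P_def)
      qed
      moreover have "c - 1 \<le> v!i" using iP by (simp add: P_def)
      ultimately show "z!j \<le> z!i" using zi[OF jn(1)] zi[OF in_] jn(2) iP by simp
    next
      show "v = map (\<lambda>i. z!i - (if i \<in> P then 1 else 0)) [0..<length z]"
        using lv lz zi by (intro nth_equalityI) auto
    qed
    show ?thesis unfolding cup_step_def using fm ge by (auto simp: z_def v_def n_def)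
  qed
qed

theorem lemma6p15:
  fixes x y y' :: "real list"
  assumes "length x = length y"
    and "sorted_wrt (\<ge>) x" and "sorted_wrt (\<ge>) y"
    and "majorizes x y"
    and "cup_step y y'"
  shows "\<exists>x'. cup_step x x' \<and> majorizes x' y'"
proof -
  note len = assms(1) and sx = assms(2) and sy = assms(3)
  define n where "n = length y"
  obtain p a where fm: "filler_move n p a" and ge: "greedy_empty p (map2 (+) y a) y'"
    using assms(5) unfolding cup_step_def n_def by blast
  define w where "w = map2 (+) y a"
  have la: "length a = n" "1 \<le> p" "p \<le> n" "sum_list a = real p"
    using fm by (auto simp: filler_move_def)
  have lw: "length w = n" using la by (simp add: w_def n_def)
  have wi: "w!i = y!i + a!i" if "i < n" for i using that la by (simp add: w_def n_def)
  obtain S where S: "S \<subseteq> {..<n}" "card S = p" "\<forall>i\<in>S. \<forall>j\<in>{..<n} - S. w!j \<le> w!i"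
      and y'eq: "y' = map (\<lambda>i. w!i - (if i \<in> S then 1 else 0)) [0..<n]"
    using ge lw unfolding greedy_empty_def w_def[symmetric] by auto
  have fS: "finite S" using S(1) finite_subset by blast
  have Sne: "S \<noteq> {}" using S(2) la(2) by auto
  have ly': "length y' = n" using y'eq by simp
  have y'i: "y'!i = w!i - (if i \<in> S then 1 else 0)" if "i < n" for i using that y'eq by simp
  define c where "c = Min ((\<lambda>i. w!i) ` S)"
  have cle: "c \<le> w!i" if "i \<in> S" for i using that fS by (simp add: c_def)
  have "c \<in> (\<lambda>i. w!i) ` S" unfolding c_def using fS Sne by (intro Min_in) auto
  then obtain k where k: "k \<in> S" "c = w!k" by auto
  have a01: "0 \<le> a!i \<and> a!i \<le> 1" if "i < n" for i using fm that by (simp add: filler_move_def)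
  have hi: "y'!i \<le> max (y!i) c" if i: "i < n" for i
  proof (cases "i \<in> S")
    case True then show ?thesis using y'i[OF i] wi[OF i] a01[OF i] by (simp add: le_max_iff_disj)
  next
    case False
    then have "w!i \<le> w!k" using S(3) k(1) i by auto
    then show ?thesis using y'i[OF i] False k(2) by simp
  qed
  have lo: "min (y!i) (c-1) \<le> y'!i" if i: "i < n" for i
  proof (cases "i \<in> S")
    case True then show ?thesis using y'i[OF i] cle[OF True] by simp
  next
    case False then show ?thesis using y'i[OF i] wi[OF i] a01[OF i] by (simp add: min_le_iff_disj)
  qed
  have sumy': "sum_list y' = sum_list y"
  proof -
    have ind: "(\<Sum>i<n. if i \<in> S then (1::real) else 0) = real p"
    proof -
      have "(\<Sum>i<n. if i \<in> S then (1::real) else 0) = (\<Sum>i\<in>S. 1)"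
        using S(1) by (simp add: sum.If_cases Int_absorb1 Int_absorb2)
      then show ?thesis using S(2) by simp
    qed
    have "sum_list y' = (\<Sum>i<n. y!i + a!i - (if i \<in> S then 1 else 0))"
      using ly' y'i wi by (simp add: sum_list_sum_nth atLeast0LessThan)
    also have "\<dots> = (\<Sum>i<n. y!i) + (\<Sum>i<n. a!i) - (\<Sum>i<n. if i \<in> S then (1::real) else 0)"
      by (simp add: sum.distrib sum_subtractf)
    also have "(\<Sum>i<n. a!i) = real p" using la by (simp add: sum_list_sum_nth atLeast0LessThan)
    finally show ?thesis using ind by (simp add: sum_list_sum_nth atLeast0LessThan n_def)
  qed
  have maj: "length x = length y" "sum_list x = sum_list y"
    "\<And>m. m \<le> length x \<Longrightarrow> sum_list (take m (rev (sort y))) \<le> sum_list (take m (rev (sort x)))"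
    using assms(4) unfolding majorizes_def by auto
  have pre: "(\<Sum>j<m. y!j) \<le> (\<Sum>j<m. x!j)" if "m \<le> n" for m
    using maj(3)[of m] that rev_sort_id[OF sx] rev_sort_id[OF sy] sum_take len by (simp add: n_def)
  have lx: "length x = n" using len by (simp add: n_def)
  define x' where "x' = xnew x c"
  have lx': "length x' = n" using lx by (simp add: x'_def xnew_def)
  have n1: "1 \<le> length x" using la lx by simp
  have cs: "cup_step x x'" unfolding x'_def by (rule cup_step_xnew[OF sx n1])
  have mj: "majorizes x' y'"
    unfolding majorizes_def
  proof (intro conjI allI impI)
    show "length x' = length y'" using lx' ly' by simp
    have "sum_list x' = FF x c n" using xnew_prefix[of n x c] lx lx'
      by (simp add: x'_def sum_list_sum_nth atLeast0LessThan)
    then show "sum_list x' = sum_list y'" using FF_n[of x c] lx maj(2) sumy' by simp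
  next
    fix m assume m: "m \<le> length x'"
    obtain S' where S': "S' \<subseteq> {..<length y'}" "card S' = m"
        "sum_list (take m (rev (sort y'))) = (\<Sum>i\<in>S'. y'!i)"
      using top_attained[of m y'] m lx' ly' by auto
    have "(\<Sum>i\<in>S'. y'!i) \<le> FF x c m"
      by (rule ybound[OF sx sy lx _ ly' pre sumy' hi lo]) (use S' ly' len n_def in auto)
    also have "\<dots> = (\<Sum>i\<in>{..<m}. x'!i)" using xnew_prefix[of m x c] m lx lx' by (simp add: x'_def)
    also have "\<dots> \<le> sum_list (take m (rev (sort x')))" by (rule top_ge) (use m in auto)
    finally show "sum_list (take m (rev (sort y'))) \<le> sum_list (take m (rev (sort x')))" using S' by simp
  qed
  show ?thesis using cs mj by blast
qed

end
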